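(* For $n\geq 4$ and $1\leq i\leq n-3$, \[\frac{n+1}{i+1}\leq \frac{\ell_{i+1}(n)}{\ell_i(n)}\leq \frac{\lceil i/2\rceil - \lfloor i/2\rfloor}{\lceil i/2\rceil} + \frac{n-\lceil i/2\rceil}{\lceil (i+2)/2\rceil}.\]
   Context: For $0\leq i\leq 2n$, $\ell_i(n)$ denotes the number of vectors in $\{0,1,2\}^n$ whose coordinates sum to $i$. *)

theory Defs
  imports Complex_Main "HOL-Library.FuncSet"
begin

definition ell :: "nat \<Rightarrow> nat \<Rightarrow> nat" where
  "ell i n = card {v \<in> {0..<n} \<rightarrow>\<^sub>E {0::nat,1,2}. (\<Sum>k<n. v k) = i}"

end

theory Submission
  imports Defs
begin

definition AA :: "nat \<Rightarrow> nat \<Rightarrow> (nat \<Rightarrow> nat) set" where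
  "AA n i = {v \<in> {0..<n} \<rightarrow>\<^sub>E {0::nat,1,2}. (\<Sum>k<n. v k) = i}"

lemma ell_AA: "ell i n = card (AA n i)" by (simp add: ell_def AA_def)

lemma finite_AA: "finite (AA n i)"
  unfolding AA_def by (rule finite_subset[of _ "{0..<n} \<rightarrow>\<^sub>E {0::nat,1,2}"]) (auto intro: finite_PiE)

lemma ell_0: "ell i 0 = (if i = 0 then 1 else 0)"
  by (simp add: ell_def)

lemma card_slice:
  assumes "c \<le> i" "c \<le> 2"
  shows "card {v \<in> AA (Suc n) i. v n = c} = card (AA n (i - c))"
proof -
  have "bij_betw (\<lambda>v. restrict v {0..<n}) {v \<in> AA (Suc n) i. v n = c} (AA n (i - c))"
  proof (rule bij_betw_byWitness[where f' = "\<lambda>w. w(n := c)"])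
    show "\<forall>a\<in>{v \<in> AA (Suc n) i. v n = c}. (restrict a {0..<n})(n := c) = a"
    proof
      fix a assume a: "a \<in> {v \<in> AA (Suc n) i. v n = c}"
      then have ext: "a \<in> extensional {0..<Suc n}" by (auto simp: AA_def PiE_def)
      show "(restrict a {0..<n})(n := c) = a"
      proof
        fix x show "((restrict a {0..<n})(n := c)) x = a x"
          using a ext by (cases "x < n"; cases "x = n") (auto simp: extensional_def)
      qed
    qed
    show "\<forall>a'\<in>AA n (i - c). restrict (a'(n := c)) {0..<n} = a'"
    proof
      fix a assume a: "a \<in> AA n (i - c)"
      then have ext: "a \<in> extensional {0..<n}" by (auto simp: AA_def PiE_def)
      show "restrict (a(n := c)) {0..<n} = a"
      proof
        fix x show "restrict (a(n := c)) {0..<n} x = a x"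
          using a ext by (cases "x < n") (auto simp: extensional_def)
      qed
    qed
    show "(\<lambda>v. restrict v {0..<n}) ` {v \<in> AA (Suc n) i. v n = c} \<subseteq> AA n (i - c)"
    proof
      fix w assume "w \<in> (\<lambda>v. restrict v {0..<n}) ` {v \<in> AA (Suc n) i. v n = c}"
      then obtain v where v: "v \<in> AA (Suc n) i" "v n = c" and w: "w = restrict v {0..<n}" by auto
      have "(\<Sum>k<n. w k) = (\<Sum>k<n. v k)" unfolding w by (rule sum.cong) auto
      moreover have "(\<Sum>k<Suc n. v k) = i" using v by (simp add: AA_def)
      ultimately have "(\<Sum>k<n. w k) = i - c" using v by simp
      moreover have "w \<in> {0..<n} \<rightarrow>\<^sub>E {0::nat,1,2}" using v unfolding w AA_def by (auto simp: PiE_iff)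
      ultimately show "w \<in> AA n (i - c)" by (simp add: AA_def)
    qed
    show "(\<lambda>w. w(n := c)) ` AA n (i - c) \<subseteq> {v \<in> AA (Suc n) i. v n = c}"
    proof
      fix v assume "v \<in> (\<lambda>w. w(n := c)) ` AA n (i - c)"
      then obtain w where w: "w \<in> AA n (i - c)" and v: "v = w(n := c)" by auto
      have "(\<Sum>k<n. v k) = (\<Sum>k<n. w k)" unfolding v by (rule sum.cong) auto
      then have "(\<Sum>k<Suc n. v k) = i" using w assms by (simp add: AA_def v)
      moreover have "v \<in> {0..<Suc n} \<rightarrow>\<^sub>E {0::nat,1,2}" 
      proof -
        have c2: "c \<in> {0,1,2}" using assms(2) by auto
        show ?thesis using w c2 unfolding v AA_def by (auto simp: PiE_iff extensional_def)
      qed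
      ultimately show "v \<in> {v \<in> AA (Suc n) i. v n = c}" by (simp add: AA_def v)
    qed
  qed
  then show ?thesis by (rule bij_betw_same_card)
qed

lemma slice_empty:
  assumes "i < c"
  shows "{v \<in> AA (Suc n) i. v n = c} = {}"
proof -
  { fix v assume v: "v \<in> AA (Suc n) i" "v n = c"
    have "(\<Sum>k<Suc n. v k) = i" using v by (simp add: AA_def)
    then have "v n \<le> i" by simp
    with v assms have False by simp }
  then show ?thesis by auto
qed

lemma card_slice': assumes "c \<le> 2" shows "card {v \<in> AA (Suc n) i. v n = c} = (if c \<le> i then ell (i - c) n else 0)"
proof (cases "c \<le> i")
  case True then show ?thesis using card_slice[of c i n] assms by (simp add: ell_AA)
next
  case False then have "i < c" by simp
  have "card {v \<in> AA (Suc n) i. v n = c} = 0" by (simp only: slice_empty[OF \<open>i < c\<close>] card.empty)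
  with False show ?thesis by simp
qed

lemma ell_Suc: "ell i (Suc n) = ell i n + (if 1 \<le> i then ell (i-1) n else 0) + (if 2 \<le> i then ell (i-2) n else 0)"
proof -
  define S0 where "S0 = {v \<in> AA (Suc n) i. v n = 0}"
  define S1 where "S1 = {v \<in> AA (Suc n) i. v n = 1}"
  define S2 where "S2 = {v \<in> AA (Suc n) i. v n = 2}"
  have split: "AA (Suc n) i = S0 \<union> S1 \<union> S2" unfolding S0_def S1_def S2_def by (auto simp: AA_def PiE_iff)
  have fin: "finite S0" "finite S1" "finite S2" unfolding S0_def S1_def S2_def using finite_AA by auto
  have d1: "S0 \<inter> S1 = {}" "(S0 \<union> S1) \<inter> S2 = {}" unfolding S0_def S1_def S2_def by auto
  have "card (AA (Suc n) i) = card S0 + card S1 + card S2"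
    unfolding split using fin d1 by (simp add: card_Un_disjoint)
  moreover have "card S0 = ell i n" unfolding S0_def using card_slice'[of 0 n i] by simp
  moreover have "card S1 = (if 1 \<le> i then ell (i-1) n else 0)" unfolding S1_def using card_slice'[of 1 n i] by simp
  moreover have "card S2 = (if 2 \<le> i then ell (i-2) n else 0)" unfolding S2_def using card_slice'[of 2 n i] by simp
  moreover have "ell i (Suc n) = card (AA (Suc n) i)" by (rule ell_AA)
  ultimately show ?thesis by simp
qed
definition SS :: "nat \<Rightarrow> nat \<Rightarrow> nat" where
  "SS n i = (\<Sum>k\<le>i. (n choose k) * (k choose (i - k)))"

lemma SS_0: "SS 0 i = (if i = 0 then 1 else 0)"
proof -
  have "SS 0 i = (\<Sum>k\<le>i. if k = 0 then (0 choose i) else 0)"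
    unfolding SS_def by (rule sum.cong) auto
  then show ?thesis by simp
qed

lemma SS_SSuc: "SS (Suc n) (Suc (Suc p)) = SS n (Suc (Suc p)) + SS n (Suc p) + SS n p"
proof -
  have A: "SS (Suc n) (Suc (Suc p)) = (\<Sum>j\<le>Suc p. ((n choose j) + (n choose Suc j)) * (Suc j choose (Suc p - j)))"
    unfolding SS_def by (subst sum.atMost_Suc_shift) simp
  have B: "SS n (Suc (Suc p)) = (\<Sum>j\<le>Suc p. (n choose Suc j) * (Suc j choose (Suc p - j)))"
    unfolding SS_def by (subst sum.atMost_Suc_shift) simp
  have C: "(\<Sum>j\<le>Suc p. (n choose j) * (Suc j choose (Suc p - j)))
      = (\<Sum>j\<le>p. (n choose j) * (Suc j choose (Suc p - j))) + (n choose Suc p)"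
    by simp
  have D: "(\<Sum>j\<le>p. (n choose j) * (Suc j choose (Suc p - j)))
      = (\<Sum>j\<le>p. (n choose j) * (j choose (p - j)) + (n choose j) * (j choose (Suc p - j)))"
  proof (rule sum.cong)
    fix j assume "j \<in> {..p}"
    then have "Suc p - j = Suc (p - j)" by auto
    then show "(n choose j) * (Suc j choose (Suc p - j)) = (n choose j) * (j choose (p - j)) + (n choose j) * (j choose (Suc p - j))"
      by (simp add: algebra_simps)
  qed simp
  have E: "SS n (Suc p) = (\<Sum>j\<le>p. (n choose j) * (j choose (Suc p - j))) + (n choose Suc p)"
    unfolding SS_def by simp
  have F: "SS (Suc n) (Suc (Suc p)) = (\<Sum>j\<le>Suc p. (n choose j) * (Suc j choose (Suc p - j))) + SS n (Suc (Suc p))"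
    unfolding A B by (simp add: sum.distrib distrib_right)
  have G: "(\<Sum>j\<le>p. (n choose j) * (j choose (p - j)) + (n choose j) * (j choose (Suc p - j))) = SS n p + (\<Sum>j\<le>p. (n choose j) * (j choose (Suc p - j)))"
    unfolding SS_def by (rule sum.distrib)
  show ?thesis unfolding F C D G E by simp
qed

lemma SS_Suc: "SS (Suc n) i = SS n i + (if 1 \<le> i then SS n (i-1) else 0) + (if 2 \<le> i then SS n (i-2) else 0)"
proof (cases i)
  case 0 then show ?thesis by (simp add: SS_def)
next
  case (Suc q)
  show ?thesis
  proof (cases q)
    case 0 then show ?thesis using Suc by (simp add: SS_def)
  next
    case (Suc p)
    then show ?thesis using \<open>i = Suc q\<close> SS_SSuc by simp
  qed
qed

lemma ell_SS: "ell i n = SS n i"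
proof (induction n arbitrary: i)
  case 0 then show ?case by (simp add: ell_0 SS_0)
next
  case (Suc n) then show ?case by (simp add: ell_Suc SS_Suc)
qed


lemma bin_X: "(n choose Suc k) * Suc k = (n choose k) * (n - k)"
proof (cases n)
  case 0 then show ?thesis by simp
next
  case (Suc m)
  have "Suc k * (Suc m choose Suc k) = Suc m * (m choose k)" by (rule Suc_times_binomial)
  moreover have "(Suc m - k) * (Suc m choose k) = Suc m * ((Suc m - 1) choose k)" by (rule binomial_absorb_comp)
  ultimately show ?thesis using Suc by (simp add: mult.commute)
qed

lemma bin_Y: "((k - 1) choose j) * k = (k choose j) * (k - j)"
  using binomial_absorb_comp[of k j] by (simp add: mult.commute)

lemma ell_Suc_sum:
  assumes "1 \<le> i"
  shows "ell (Suc i) n = (\<Sum>k\<le>i. (n choose Suc k) * (k choose (i - k)) + (n choose k) * ((k - 1) choose (i - k)))"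
proof -
  have s1: "ell (Suc i) n = (\<Sum>k\<le>i. (n choose Suc k) * (Suc k choose (i - k)))"
    unfolding ell_SS SS_def by (subst sum.atMost_Suc_shift) simp
  have s2: "(\<Sum>k\<le>i. (n choose Suc k) * (Suc k choose (i - k)))
     = (\<Sum>k\<le>i. (n choose Suc k) * (k choose (i - k)) + (if k < i then (n choose Suc k) * (k choose (i - Suc k)) else 0))"
  proof (rule sum.cong)
    fix k assume k: "k \<in> {..i}"
    show "(n choose Suc k) * (Suc k choose (i - k)) = (n choose Suc k) * (k choose (i - k)) + (if k < i then (n choose Suc k) * (k choose (i - Suc k)) else 0)"
    proof (cases "k < i")
      case True
      then have "i - k = Suc (i - Suc k)" by simp
      then show ?thesis using True by (simp add: algebra_simps)
    next
      case False
      with k have "k = i" by simp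
      then show ?thesis by simp
    qed
  qed simp
  have s3: "(\<Sum>k\<le>i. (if k < i then (n choose Suc k) * (k choose (i - Suc k)) else 0))
      = (\<Sum>k<i. (n choose Suc k) * (k choose (i - Suc k)))"
  proof -
    have "(\<Sum>k\<le>i. (if k < i then (n choose Suc k) * (k choose (i - Suc k)) else 0))
        = (\<Sum>k<Suc i. (if k < i then (n choose Suc k) * (k choose (i - Suc k)) else 0))"
      by (simp only: lessThan_Suc_atMost)
    also have "\<dots> = (\<Sum>k<i. (if k < i then (n choose Suc k) * (k choose (i - Suc k)) else 0))"
      by (simp only: sum.lessThan_Suc) simp
    also have "\<dots> = (\<Sum>k<i. (n choose Suc k) * (k choose (i - Suc k)))"
      by (rule sum.cong) auto
    finally show ?thesis .
  qed
  have s4: "(\<Sum>k\<le>i. (n choose k) * ((k - 1) choose (i - k))) = (\<Sum>k<i. (n choose Suc k) * (k choose (i - Suc k)))"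
  proof -
    have "(\<Sum>k\<le>i. (n choose k) * ((k - 1) choose (i - k))) = (\<Sum>k<Suc i. (n choose k) * ((k - 1) choose (i - k)))"
      by (simp only: lessThan_Suc_atMost)
    also have "\<dots> = (n choose 0) * ((0 - 1) choose (i - 0)) + (\<Sum>k<i. (n choose Suc k) * ((Suc k - 1) choose (i - Suc k)))"
      by (rule sum.lessThan_Suc_shift)
    also have "\<dots> = (\<Sum>k<i. (n choose Suc k) * (k choose (i - Suc k)))"
      using assms by simp
    finally show ?thesis .
  qed
  show ?thesis
    unfolding s1 s2 sum.distrib s3 s4 ..
qed

definition H :: "nat \<Rightarrow> nat \<Rightarrow> nat \<Rightarrow> real" where
  "H n i k = (real n - real k) / (real k + 1) + (2 * real k - real i) / real k"

lemma term_eq: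
  assumes "1 \<le> i" "k \<le> i"
  shows "real ((n choose Suc k) * (k choose (i - k)) + (n choose k) * ((k - 1) choose (i - k)))
       = real ((n choose k) * (k choose (i - k))) * H n i k"
proof (cases "n < k")
  case True
  then show ?thesis by (simp add: binomial_eq_0)
next
  case nk: False
  show ?thesis
  proof (cases "k < i - k")
    case True
    then have "k - 1 < i - k" by simp
    with True show ?thesis by (simp add: binomial_eq_0)
  next
    case False
    then have k1: "1 \<le> k" using assms by auto
    have ik: "i \<le> 2 * k" using False by simp
    have x0: "real (n choose Suc k) * (real k + 1) = real (n choose k) * (real n - real k)"
      using arg_cong[OF bin_X[of n k], of real] nk by (simp add: of_nat_diff algebra_simps)
    have x: "real (n choose Suc k) = real (n choose k) * (real n - real k) / (real k + 1)"
      using x0 by (simp add: field_simps)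
    have y0: "real ((k - 1) choose (i - k)) * real k = real (k choose (i - k)) * (2 * real k - real i)"
      using arg_cong[OF bin_Y[of k "i - k"], of real] ik assms(2) by (simp add: of_nat_diff)
    have y: "real ((k - 1) choose (i - k)) = real (k choose (i - k)) * (2 * real k - real i) / real k"
      using y0 k1 by (simp add: field_simps)
    show ?thesis
      unfolding H_def of_nat_add of_nat_mult x y using k1 by (simp add: field_simps)
  qed
qed

lemma key_real:
  assumes "1 \<le> i"
  shows "real (ell (Suc i) n) = (\<Sum>k\<le>i. real ((n choose k) * (k choose (i - k))) * H n i k)"
  unfolding ell_Suc_sum[OF assms] of_nat_sum
  by (rule sum.cong) (use term_eq assms in auto)

lemma ell_real: "real (ell i n) = (\<Sum>k\<le>i. real ((n choose k) * (k choose (i - k))))"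
  unfolding ell_SS SS_def of_nat_sum ..

lemma support:
  assumes "1 \<le> i" "k \<le> i" "(n choose k) * (k choose (i - k)) \<noteq> 0"
  shows "1 \<le> k" "i \<le> 2 * k" "k \<le> n"
  using assms by (auto simp: not_less)

lemma upper_gen:
  assumes "1 \<le> i" and B: "\<And>k. 1 \<le> k \<Longrightarrow> k \<le> i \<Longrightarrow> i \<le> 2*k \<Longrightarrow> k \<le> n \<Longrightarrow> H n i k \<le> B"
  shows "real (ell (Suc i) n) \<le> B * real (ell i n)"
  unfolding key_real[OF assms(1)] ell_real[of i n] sum_distrib_left
proof (rule sum_mono)
  fix k assume k: "k \<in> {..i}"
  show "real ((n choose k) * (k choose (i - k))) * H n i k \<le> B * real ((n choose k) * (k choose (i - k)))"
  proof (cases "(n choose k) * (k choose (i - k)) = 0")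
    case True then show ?thesis by (simp only: True of_nat_0 mult_zero_left mult_zero_right order_refl)
  next
    case False
    from support[OF assms(1) _ False] k have hb: "H n i k \<le> B" using B by auto
    have "0 \<le> real ((n choose k) * (k choose (i - k)))" by simp
    from mult_right_mono[OF hb this] show ?thesis by (metis mult.commute)
  qed
qed

lemma lower_gen:
  assumes "1 \<le> i" and B: "\<And>k. 1 \<le> k \<Longrightarrow> k \<le> i \<Longrightarrow> i \<le> 2*k \<Longrightarrow> k \<le> n \<Longrightarrow> B \<le> H n i k"
  shows "B * real (ell i n) \<le> real (ell (Suc i) n)"
  unfolding key_real[OF assms(1)] ell_real[of i n] sum_distrib_left
proof (rule sum_mono)
  fix k assume k: "k \<in> {..i}"
  show "B * real ((n choose k) * (k choose (i - k))) \<le> real ((n choose k) * (k choose (i - k))) * H n i k"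
  proof (cases "(n choose k) * (k choose (i - k)) = 0")
    case True then show ?thesis by (simp only: True of_nat_0 mult_zero_left mult_zero_right order_refl)
  next
    case False
    from support[OF assms(1) _ False] k have hb: "B \<le> H n i k" using B by auto
    have "0 \<le> real ((n choose k) * (k choose (i - k)))" by simp
    from mult_right_mono[OF hb this] show ?thesis by (metis mult.commute)
  qed
qed


lemma H_alt: "1 \<le> k \<Longrightarrow> H n i k = ((real n - real k) * real k + (2 * real k - real i) * (real k + 1)) / (real k * (real k + 1))"
  unfolding H_def by (simp add: field_simps)

lemma H_lower:
  assumes "1 \<le> k" "k \<le> i" "i \<le> 2*k" "i + 3 \<le> n"
  shows "(real n + 1) / (real i + 1) \<le> H n i k"
proof -
  let ?num = "(real n - real k) * real k + (2 * real k - real i) * (real k + 1)"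
  have id: "?num * (real i + 1) - (real n + 1) * (real k * (real k + 1))
      = (real i - real k) * ((real n - real i) * real k - (real i + 1))"
    by (simp add: algebra_simps)
  have nn: "0 \<le> (real i - real k) * ((real n - real i) * real k - (real i + 1))"
  proof (cases "k = i")
    case True then show ?thesis by simp
  next
    case False
    have a: "3 \<le> real n - real i" using assms by simp
    have b: "3 * real k \<le> (real n - real i) * real k" using mult_right_mono[OF a, of "real k"] by simp
    have c: "real i + 1 \<le> 3 * real k" using assms by simp
    have f1: "0 \<le> real i - real k" using assms by simp
    have f2: "0 \<le> (real n - real i) * real k - (real i + 1)" using b c by linarith
    show ?thesis by (rule mult_nonneg_nonneg[OF f1 f2])
  qed
  have pos: "0 < real k * (real k + 1)" using assms by simp
  have "(real n + 1) * (real k * (real k + 1)) \<le> ?num * (real i + 1)" using id nn by linarith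
  then show ?thesis unfolding H_alt[OF assms(1)] using pos by (simp add: field_simps)
qed

lemma H_upper_even:
  assumes "1 \<le> k" "k \<le> 2*m" "2*m \<le> 2*k" "2*m + 3 \<le> n"
  shows "H n (2*m) k \<le> (real n - real m) / (real m + 1)"
proof -
  let ?num = "(real n - real k) * real k + (2 * real k - real (2*m)) * (real k + 1)"
  have id: "(real n - real m) * (real k * (real k + 1)) - ?num * (real m + 1)
      = (real k - real m) * ((real n - 2 * real m - 1) * real k - 2 * (real m + 1))"
    by (simp add: algebra_simps)
  have nn: "0 \<le> (real k - real m) * ((real n - 2 * real m - 1) * real k - 2 * (real m + 1))"
  proof (cases "k = m")
    case True then show ?thesis by simp
  next
    case False
    have a: "2 \<le> real n - 2 * real m - 1" using assms by simp
    have b: "2 * real k \<le> (real n - 2 * real m - 1) * real k" using mult_right_mono[OF a, of "real k"] by simp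
    have "m + 1 \<le> k" using assms False by arith
    then have c: "2 * (real m + 1) \<le> 2 * real k" by simp
    have f1: "0 \<le> real k - real m" using assms by simp
    have f2: "0 \<le> (real n - 2 * real m - 1) * real k - 2 * (real m + 1)" using b c by linarith
    show ?thesis by (rule mult_nonneg_nonneg[OF f1 f2])
  qed
  have pos: "0 < real k * (real k + 1)" using assms by simp
  have "?num * (real m + 1) \<le> (real n - real m) * (real k * (real k + 1))" using id nn by linarith
  then show ?thesis unfolding H_alt[OF assms(1)] using pos by (simp add: field_simps)
qed

lemma H_upper_odd:
  assumes "1 \<le> k" "k \<le> 2*m+1" "2*m+1 \<le> 2*k" "2*m + 4 \<le> n"
  shows "H n (2*m+1) k \<le> 1 / (real m + 1) + (real n - (real m + 1)) / (real m + 2)"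
proof -
  define M where "M = real m + 1"
  let ?num = "(real n - real k) * real k + (2 * real k - real (2*m+1)) * (real k + 1)"
  have M1: "1 \<le> M" unfolding M_def by simp
  have rhs: "1 / (real m + 1) + (real n - (real m + 1)) / (real m + 2) = (M + 1 + M * (real n - M)) / (M * (M + 1))"
    unfolding M_def by (simp add: field_simps)
  have id: "(M + 1 + M * (real n - M)) * (real k * (real k + 1)) - ?num * (M * (M + 1))
      = (real k - M) * ((1 + M * real n - 2 * M * M) * real k - (M + 1) * (2 * M - 1))"
    unfolding M_def by (simp add: algebra_simps)
  have "m + 1 \<le> k" using assms by arith
  then have kM: "M \<le> real k" unfolding M_def by simp
  have nn: "0 \<le> (real k - M) * ((1 + M * real n - 2 * M * M) * real k - (M + 1) * (2 * M - 1))"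
  proof (cases "real k = M")
    case True then show ?thesis by simp
  next
    case False
    then have "k \<noteq> m + 1" unfolding M_def by simp
    with \<open>m + 1 \<le> k\<close> have "m + 2 \<le> k" by arith
    then have kM1: "M + 1 \<le> real k" unfolding M_def by simp
    have nM: "2 * M + 2 \<le> real n" unfolding M_def using assms by simp
    have a0: "M * (2 * M + 2) \<le> M * real n" using mult_left_mono[OF nM] M1 by simp
    have a: "1 + 2 * M \<le> 1 + M * real n - 2 * M * M" using a0 by (simp add: algebra_simps)
    have b: "(1 + 2 * M) * (M + 1) \<le> (1 + M * real n - 2 * M * M) * real k"
    proof -
      have a': "0 \<le> 1 + M * real n - 2 * M * M" using a M1 by linarith
      have m0: "0 \<le> M + 1" using M1 by simp
      show ?thesis by (rule mult_mono[OF a kM1 a' m0])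
    qed
    have c: "(M + 1) * (2 * M - 1) \<le> (1 + 2 * M) * (M + 1)" using M1 by (simp add: algebra_simps)
    have f1: "0 \<le> real k - M" using kM by simp
    have f2: "0 \<le> (1 + M * real n - 2 * M * M) * real k - (M + 1) * (2 * M - 1)" using b c by linarith
    show ?thesis by (rule mult_nonneg_nonneg[OF f1 f2])
  qed
  have pos: "0 < real k * (real k + 1)" using assms by simp
  have Mpos: "0 < M * (M + 1)" using M1 by simp
  have "?num * (M * (M + 1)) \<le> (M + 1 + M * (real n - M)) * (real k * (real k + 1))" using id nn by linarith
  then have "?num / (real k * (real k + 1)) \<le> (M + 1 + M * (real n - M)) / (M * (M + 1))"
    using pos Mpos by (simp add: field_simps)
  then show ?thesis unfolding H_alt[OF assms(1)] rhs .
qed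


lemma ell_pos: assumes "i \<le> 2 * n" shows "0 < ell i n"
proof -
  let ?k = "i - i div 2"
  have "0 < SS n i" unfolding SS_def
  proof (rule sum_pos2[where i = ?k])
    show "finite {..i}" by simp
    show "?k \<in> {..i}" by simp
    have "?k \<le> n" using assms by arith
    moreover have "i - ?k \<le> ?k" by arith
    ultimately show "0 < (n choose ?k) * (?k choose (i - ?k))" by simp
  qed simp
  then show ?thesis by (simp add: ell_SS)
qed

theorem mainTheorem15:
  fixes n i :: nat
  assumes "n \<ge> 4" and "1 \<le> i" and "i \<le> n - 3"
  shows "real (n + 1) / real (i + 1) \<le> real (ell (i + 1) n) / real (ell i n)
    \<and> real (ell (i + 1) n) / real (ell i n)
        \<le> real_of_int (\<lceil>real i / 2\<rceil> - \<lfloor>real i / 2\<rfloor>) / real_of_int \<lceil>real i / 2\<rceil>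
          + (real n - real_of_int \<lceil>real i / 2\<rceil>) / real_of_int \<lceil>real (i + 2) / 2\<rceil>"
proof -
  have i3: "i + 3 \<le> n" using assms by arith
  have pos: "0 < real (ell i n)" using ell_pos[of i n] i3 by simp
  have low: "(real n + 1) / (real i + 1) * real (ell i n) \<le> real (ell (Suc i) n)"
    by (rule lower_gen[OF assms(2)]) (rule H_lower, use i3 in auto)
  have L: "real (n + 1) / real (i + 1) \<le> real (ell (i + 1) n) / real (ell i n)"
  proof -
    have "(real n + 1) / (real i + 1) \<le> real (ell (Suc i) n) / real (ell i n)"
      by (subst pos_le_divide_eq[OF pos]) (rule low)
    then show ?thesis by (simp add: add.commute)
  qed
  obtain m where "i = 2 * m \<or> i = 2 * m + 1" by (metis dvd_mult_div_cancel odd_two_times_div_two_succ)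
  then have U: "real (ell (i + 1) n) / real (ell i n)
        \<le> real_of_int (\<lceil>real i / 2\<rceil> - \<lfloor>real i / 2\<rfloor>) / real_of_int \<lceil>real i / 2\<rceil>
          + (real n - real_of_int \<lceil>real i / 2\<rceil>) / real_of_int \<lceil>real (i + 2) / 2\<rceil>"
  proof
    assume im: "i = 2 * m"
    have h1: "real i / 2 = real m" using im by simp
    have h2: "real (i + 2) / 2 = real (m + 1)" using im by simp
    have up: "real (ell (Suc i) n) \<le> (real n - real m) / (real m + 1) * real (ell i n)"
      by (rule upper_gen[OF assms(2)]) (unfold im, rule H_upper_even, use i3 im in auto)
    have "real (ell (i + 1) n) / real (ell i n) \<le> (real n - real m) / (real m + 1)"
      using up pos by (simp add: pos_divide_le_eq)
    then show ?thesis unfolding h1 h2 by (simp add: add.commute)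
  next
    assume im: "i = 2 * m + 1"
    have c1: "\<lceil>real i / 2\<rceil> = int m + 1"
      by (rule ceiling_unique) (use im in simp_all)
    have f1: "\<lfloor>real i / 2\<rfloor> = int m"
      by (rule floor_unique) (use im in simp_all)
    have c2: "\<lceil>real (i + 2) / 2\<rceil> = int m + 2"
      by (rule ceiling_unique) (use im in simp_all)
    have up: "real (ell (Suc i) n) \<le> (1 / (real m + 1) + (real n - (real m + 1)) / (real m + 2)) * real (ell i n)"
      by (rule upper_gen[OF assms(2)]) (unfold im, rule H_upper_odd, use i3 im in auto)
    have "real (ell (i + 1) n) / real (ell i n) \<le> 1 / (real m + 1) + (real n - (real m + 1)) / (real m + 2)"
      using up pos by (simp add: pos_divide_le_eq)
    then show ?thesis unfolding c1 f1 c2 by (simp add: add.commute)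
  qed
  show ?thesis using L U by simp
qed

end
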